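(* Let $0\le d\le n-1$ and $x_1<\cdots<x_n$ real, $\mathcal{X}=\{x_1,\dots,x_n\}$. Let $A_{d,n}(\mathcal{X})$ be the $(n-d)\times(n-d)$ matrix with entries $h_r(x_i,x_{i+1},\dots,x_{i+d})$, rows indexed by $0\le r\le n-d-1$ and columns by $1\le i\le n-d$. Then \[\det A_{d,n}(\mathcal{X})=\prod_{\substack{1\le i<j\le n\\ j-i\ge d+1}}(x_j-x_i).\] In particular, $A_{d,n}(\mathcal{X})$ is invertible whenever the $x_r$ are pairwise distinct.
   Context: $h_r$ denotes the complete homogeneous symmetric polynomial of degree $r$ (with $h_0=1$). An empty product equals $1$. *)

theory Defs
  imports Main "Jordan_Normal_Form.Determinant"
begin

definition hcomp :: "nat \<Rightarrow> nat \<Rightarrow> (nat \<Rightarrow> real) \<Rightarrow> real" where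
  "hcomp r d y = (\<Sum>\<alpha> \<in> {\<alpha>. (\<forall>i. d < i \<longrightarrow> \<alpha> i = 0) \<and> (\<Sum>i\<le>d. \<alpha> i) = r}.
                     \<Prod>i\<le>d. y i ^ \<alpha> i)"

text \<open>The (n-d) x (n-d) matrix A_{d,n}(X): row r (0 \<le> r \<le> n-d-1), column i (1 \<le> i \<le> n-d,
  stored at 0-based column index i-1) has entry h_r(x_i, ..., x_{i+d}).\<close>
definition A_mat :: "nat \<Rightarrow> nat \<Rightarrow> (nat \<Rightarrow> real) \<Rightarrow> real mat" where
  "A_mat d n x = mat (n - d) (n - d) (\<lambda>(r, c). hcomp r d (\<lambda>k. x (c + 1 + k)))"

end

theory Submission
  imports Defs
begin

definition Sset :: "nat \<Rightarrow> nat \<Rightarrow> (nat \<Rightarrow> nat) set" where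
  "Sset k r = {\<alpha>. (\<forall>i. k \<le> i \<longrightarrow> \<alpha> i = 0) \<and> (\<Sum>i<k. \<alpha> i) = r}"

definition PP :: "nat \<Rightarrow> nat \<Rightarrow> (nat \<Rightarrow> real) \<Rightarrow> real" where
  "PP k r y = (\<Sum>\<alpha>\<in>Sset k r. \<Prod>i<k. y i ^ \<alpha> i)"

lemma hcomp_PP: "hcomp r d y = PP (Suc d) r y"
proof -
  have "{\<alpha>. (\<forall>i. d < i \<longrightarrow> \<alpha> i = 0) \<and> (\<Sum>i\<le>d. \<alpha> i) = r} = Sset (Suc d) r"
    unfolding Sset_def by (auto simp: lessThan_Suc_atMost Suc_le_eq)
  then show ?thesis unfolding hcomp_def PP_def by (simp add: lessThan_Suc_atMost)
qed

lemma Sset_0: "Sset 0 r = (if r = 0 then {\<lambda>_. 0} else {})"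
  unfolding Sset_def by auto

lemma Sset_last: "Sset (Suc k) r = (\<Union>j\<in>{..r}. (\<lambda>\<alpha>. \<alpha>(k:=j)) ` Sset k (r-j))"
proof (intro equalityI subsetI)
  fix \<alpha> assume a: "\<alpha> \<in> Sset (Suc k) r"
  let ?j = "\<alpha> k"
  have s: "(\<Sum>i<k. \<alpha> i) + \<alpha> k = r" using a unfolding Sset_def by simp
  have "\<alpha>(k:=0) \<in> Sset k (r - ?j)" using a s unfolding Sset_def by auto
  moreover have "\<alpha> = (\<alpha>(k:=0))(k:=?j)" by simp
  moreover have "?j \<in> {..r}" using s by auto
  ultimately show "\<alpha> \<in> (\<Union>j\<in>{..r}. (\<lambda>\<alpha>. \<alpha>(k:=j)) ` Sset k (r-j))" by blast
next
  fix \<alpha> assume "\<alpha> \<in> (\<Union>j\<in>{..r}. (\<lambda>\<alpha>. \<alpha>(k:=j)) ` Sset k (r-j))"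
  then obtain j \<beta> where j: "j \<le> r" and b: "\<beta> \<in> Sset k (r-j)" and e: "\<alpha> = \<beta>(k:=j)" by auto
  have "(\<Sum>i<k. \<alpha> i) = (\<Sum>i<k. \<beta> i)" unfolding e by (intro sum.cong) auto
  then show "\<alpha> \<in> Sset (Suc k) r" using b j unfolding Sset_def e by auto
qed

lemma Sset_first: "Sset (Suc k) r = (\<Union>j\<in>{..r}. (\<lambda>\<beta>. case_nat j \<beta>) ` Sset k (r-j))"
proof (intro equalityI subsetI)
  fix \<alpha> assume a: "\<alpha> \<in> Sset (Suc k) r"
  let ?j = "\<alpha> 0"
  have s0: "(\<Sum>i<Suc k. \<alpha> i) = r" using a unfolding Sset_def by blast
  have s: "\<alpha> 0 + (\<Sum>i<k. \<alpha> (Suc i)) = r" using s0 by (simp only: sum.lessThan_Suc_shift)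
  have "(\<lambda>i. \<alpha> (Suc i)) \<in> Sset k (r - ?j)" using a s unfolding Sset_def by auto
  moreover have "\<alpha> = case_nat ?j (\<lambda>i. \<alpha> (Suc i))" by (auto split: nat.split)
  moreover have "?j \<in> {..r}" using s by auto
  ultimately show "\<alpha> \<in> (\<Union>j\<in>{..r}. (\<lambda>\<beta>. case_nat j \<beta>) ` Sset k (r-j))" by blast
next
  fix \<alpha> assume "\<alpha> \<in> (\<Union>j\<in>{..r}. (\<lambda>\<beta>. case_nat j \<beta>) ` Sset k (r-j))"
  then obtain j \<beta> where j: "j \<le> r" and b: "\<beta> \<in> Sset k (r-j)" and e: "\<alpha> = case_nat j \<beta>" by auto
  have "(\<Sum>i<Suc k. \<alpha> i) = j + (\<Sum>i<k. \<beta> i)" unfolding e by (simp only: sum.lessThan_Suc_shift) simp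
  moreover have "\<forall>i. Suc k \<le> i \<longrightarrow> \<alpha> i = 0" using b unfolding e Sset_def by (auto split: nat.split)
  ultimately show "\<alpha> \<in> Sset (Suc k) r" using b j unfolding Sset_def by auto
qed

lemma disj_last: assumes "i \<noteq> j" shows "(\<lambda>\<alpha>. \<alpha>(k:=i)) ` A \<inter> (\<lambda>\<alpha>. \<alpha>(k:=j)) ` B = {}"
proof -
  have F: False if "a(k:=i) = b(k:=j)" for a b
  proof -
    have "(a(k:=i)) k = (b(k:=j)) k" using that by simp
    then show False using assms by simp
  qed
  show ?thesis using F by blast
qed

lemma disj_first: assumes "i \<noteq> j" shows "case_nat i ` A \<inter> case_nat j ` B = {}"
proof -
  have F: False if "case_nat i a = case_nat j b" for a b :: "nat \<Rightarrow> 'a"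
  proof -
    have "case_nat i a 0 = case_nat j b 0" using that by simp
    then show False using assms by simp
  qed
  show ?thesis using F by blast
qed

lemma finite_Sset: "finite (Sset k r)"
proof (induction k arbitrary: r)
  case 0 then show ?case by (simp add: Sset_0)
next
  case (Suc k) then show ?case by (subst Sset_last) auto
qed

lemma PP_last: "PP (Suc k) r y = (\<Sum>j\<le>r. y k ^ j * PP k (r-j) y)"
proof -
  let ?f = "\<lambda>\<alpha>. \<Prod>i<Suc k. y i ^ \<alpha> i"
  have "PP (Suc k) r y = (\<Sum>j\<le>r. sum ?f ((\<lambda>\<alpha>. \<alpha>(k:=j)) ` Sset k (r-j)))"
    unfolding PP_def Sset_last
    apply (rule sum.UNION_disjoint)
      apply (simp_all add: finite_Sset)
    by (intro ballI impI disj_last)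
  also have "\<dots> = (\<Sum>j\<le>r. y k ^ j * PP k (r-j) y)"
  proof (rule sum.cong[OF refl])
    fix j assume "j \<in> {..r}"
    have inj: "inj_on (\<lambda>\<alpha>. \<alpha>(k:=j)) (Sset k (r-j))"
    proof (rule inj_onI)
      fix a b assume "a \<in> Sset k (r-j)" "b \<in> Sset k (r-j)" "a(k:=j) = b(k:=j)"
      then have ak: "a k = 0" and bk: "b k = 0" and eq: "a(k:=j) = b(k:=j)" unfolding Sset_def by auto
      show "a = b"
      proof
        fix i show "a i = b i" using fun_cong[OF eq, of i] ak bk by (cases "i = k") auto
      qed
    qed
    have "sum ?f ((\<lambda>\<alpha>. \<alpha>(k:=j)) ` Sset k (r-j)) = (\<Sum>\<alpha>\<in>Sset k (r-j). ?f (\<alpha>(k:=j)))"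
      by (rule sum.reindex[OF inj, unfolded comp_def])
    also have "\<dots> = (\<Sum>\<alpha>\<in>Sset k (r-j). y k ^ j * (\<Prod>i<k. y i ^ \<alpha> i))"
    proof (rule sum.cong[OF refl])
      fix \<alpha>
      have "(\<Prod>i<k. y i ^ (\<alpha>(k:=j)) i) = (\<Prod>i<k. y i ^ \<alpha> i)" by (intro prod.cong) auto
      then show "?f (\<alpha>(k:=j)) = y k ^ j * (\<Prod>i<k. y i ^ \<alpha> i)" by simp
    qed
    finally show "sum ?f ((\<lambda>\<alpha>. \<alpha>(k:=j)) ` Sset k (r-j)) = y k ^ j * PP k (r-j) y"
      unfolding PP_def by (simp add: sum_distrib_left)
  qed
  finally show ?thesis .
qed

lemma PP_first: "PP (Suc k) r y = (\<Sum>j\<le>r. y 0 ^ j * PP k (r-j) (\<lambda>i. y (Suc i)))"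
proof -
  let ?f = "\<lambda>\<alpha>. \<Prod>i<Suc k. y i ^ \<alpha> i"
  have "PP (Suc k) r y = (\<Sum>j\<le>r. sum ?f ((\<lambda>\<beta>. case_nat j \<beta>) ` Sset k (r-j)))"
    unfolding PP_def Sset_first
    apply (rule sum.UNION_disjoint)
      apply (simp_all add: finite_Sset)
    by (intro ballI impI disj_first)
  also have "\<dots> = (\<Sum>j\<le>r. y 0 ^ j * PP k (r-j) (\<lambda>i. y (Suc i)))"
  proof (rule sum.cong[OF refl])
    fix j assume "j \<in> {..r}"
    have inj: "inj_on (\<lambda>\<beta>. case_nat j \<beta>) (Sset k (r-j))"
    proof (rule inj_onI)
      fix a b :: "nat \<Rightarrow> nat" assume "case_nat j a = case_nat j b"
      then have "\<And>i. case_nat j a (Suc i) = case_nat j b (Suc i)" by simp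
      then show "a = b" by auto
    qed
    have "sum ?f ((\<lambda>\<beta>. case_nat j \<beta>) ` Sset k (r-j)) = (\<Sum>\<alpha>\<in>Sset k (r-j). ?f (case_nat j \<alpha>))"
      by (rule sum.reindex[OF inj, unfolded comp_def])
    also have "\<dots> = (\<Sum>\<alpha>\<in>Sset k (r-j). y 0 ^ j * (\<Prod>i<k. y (Suc i) ^ \<alpha> i))"
      apply (intro sum.cong refl)
      apply (subst prod.lessThan_Suc_shift)
      apply simp
      done
    finally show "sum ?f ((\<lambda>\<beta>. case_nat j \<beta>) ` Sset k (r-j)) = y 0 ^ j * PP k (r-j) (\<lambda>i. y (Suc i))"
      unfolding PP_def by (simp add: sum_distrib_left)
  qed
  finally show ?thesis .
qed

lemma PP_0r: "PP 0 r y = (if r = 0 then 1 else 0)"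
  unfolding PP_def Sset_0 by simp

lemma PP_k0: "PP k 0 y = 1"
  by (induction k) (simp_all add: PP_0r PP_last)

lemma PP_pascal_last: "PP (Suc k) (Suc r) y = PP k (Suc r) y + y k * PP (Suc k) r y"
  unfolding PP_last[of k "Suc r"] PP_last[of k r]
  by (simp del: sum.atMost_Suc add: sum.atMost_Suc_shift sum_distrib_left mult.assoc)

lemma PP_pascal_first: "PP (Suc k) (Suc r) y = PP k (Suc r) (\<lambda>i. y (Suc i)) + y 0 * PP (Suc k) r y"
  unfolding PP_first[of k "Suc r"] PP_first[of k r]
  by (simp del: sum.atMost_Suc add: sum.atMost_Suc_shift sum_distrib_left mult.assoc)

lemma PP_diff:
  "PP (Suc k) (Suc r) z - PP (Suc k) (Suc r) (\<lambda>i. z (Suc i)) = (z 0 - z (Suc k)) * PP (Suc (Suc k)) r z"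
proof -
  have e1: "PP (Suc k) (Suc r) z = PP k (Suc r) (\<lambda>i. z (Suc i)) + z 0 * PP (Suc k) r z"
    by (rule PP_pascal_first)
  have e2: "PP (Suc k) (Suc r) (\<lambda>i. z (Suc i)) = PP k (Suc r) (\<lambda>i. z (Suc i)) + z (Suc k) * PP (Suc k) r (\<lambda>i. z (Suc i))"
    using PP_pascal_last[of k r "\<lambda>i. z (Suc i)"] by simp
  show ?thesis
  proof (cases r)
    case 0 then show ?thesis using e1 e2 by (simp add: PP_k0 algebra_simps)
  next
    case (Suc r')
    have f1: "PP (Suc (Suc k)) r z = PP (Suc k) r z + z (Suc k) * PP (Suc (Suc k)) r' z"
      using Suc PP_pascal_last[of "Suc k" r' z] by simp
    have f2: "PP (Suc (Suc k)) r z = PP (Suc k) r (\<lambda>i. z (Suc i)) + z 0 * PP (Suc (Suc k)) r' z"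
      using Suc PP_pascal_first[of "Suc k" r' z] by simp
    have "(z 0 - z (Suc k)) * PP (Suc (Suc k)) r z
        = z 0 * (PP (Suc k) r z + z (Suc k) * PP (Suc (Suc k)) r' z)
          - z (Suc k) * (PP (Suc k) r (\<lambda>i. z (Suc i)) + z 0 * PP (Suc (Suc k)) r' z)"
      using f1 f2 by (simp add: algebra_simps)
    then show ?thesis using e1 e2 by (simp add: algebra_simps)
  qed
qed


definition Mx :: "nat \<Rightarrow> nat \<Rightarrow> (nat \<Rightarrow> real) \<Rightarrow> real mat" where
  "Mx d m x = mat m m (\<lambda>(r, c). PP (Suc d) r (\<lambda>k. x (c + k)))"

definition TT :: "nat \<Rightarrow> nat \<Rightarrow> (nat \<times> nat) set" where
  "TT d m = {(i, j). i < j \<and> j < m + d \<and> d + 1 \<le> j - i}"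

lemma finite_TT: "finite (TT d m)"
  by (rule finite_subset[of _ "{..<m+d} \<times> {..<m+d}"]) (auto simp: TT_def)

lemma TT_Suc: "TT d (Suc m) = (\<lambda>c. (c, c + Suc d)) ` {..<m} \<union> TT (Suc d) m"
  unfolding TT_def by auto

lemma TT_disj: "(\<lambda>c. (c, c + Suc d)) ` {..<m} \<inter> TT (Suc d) m = {}"
  unfolding TT_def by auto

lemma prod_neg: "(\<Prod>c<m. (b c - a c :: real)) = (-1)^m * (\<Prod>c<m. a c - b c)"
  by (induction m) (simp_all add: algebra_simps)

lemma det_Mx: "det (Mx d m x) = (\<Prod>(i, j) \<in> TT d m. x j - x i)"
proof (induction m arbitrary: d)
  case 0
  have "TT d 0 = {}" unfolding TT_def by auto
  then show ?case unfolding Mx_def by simp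
next
  case (Suc m)
  let ?A = "Mx d (Suc m) x"
  let ?U = "mat (Suc m) (Suc m) (\<lambda>(i, j). if i = j then 1 else if i = Suc j then -1 else (0::real))"
  define B where "B = ?A * ?U"
  let ?D = "mat m m (\<lambda>(i, j). if i = j then x i - x (i + Suc d) else (0::real))"
  have A: "?A \<in> carrier_mat (Suc m) (Suc m)" unfolding Mx_def by simp
  have U: "?U \<in> carrier_mat (Suc m) (Suc m)" by simp
  have detU: "det ?U = 1"
    by (subst det_lower_triangular[OF _ U]) (auto simp: prod_list_diag_prod)
  have Bent: "B $$ (r, c) = (if c < m then ?A $$ (r, c) - ?A $$ (r, Suc c) else ?A $$ (r, c))"
    if r: "r < Suc m" and c: "c < Suc m" for r c
  proof -
    have "B $$ (r, c) = (\<Sum>i<Suc m. ?A $$ (r, i) * ?U $$ (i, c))"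
      using r c A unfolding B_def by (simp add: scalar_prod_def lessThan_atLeast0)
    also have "\<dots> = (\<Sum>i<Suc m. (if i = c then ?A $$ (r, i) else 0) - (if i = Suc c then ?A $$ (r, i) else 0))"
      by (intro sum.cong refl) (use c in auto)
    also have "\<dots> = (if c < m then ?A $$ (r, c) - ?A $$ (r, Suc c) else ?A $$ (r, c))"
      using c by (auto simp: sum_subtractf less_Suc_eq)
    finally show ?thesis .
  qed
  have B: "B \<in> carrier_mat (Suc m) (Suc m)" using A U unfolding B_def by simp
  have detB: "det B = det ?A" using det_mult[OF A U] detU unfolding B_def by simp
  have row0: "B $$ (0, j) = (if j = m then 1 else 0)" if "j < Suc m" for j
    using that Bent[of 0 j] unfolding Mx_def by (simp add: PP_k0)
  have z: "(\<Sum>j<m. B $$ (0, j) * cofactor B 0 j) = 0"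
    by (rule sum.neutral) (use row0 in auto)
  have b0m: "B $$ (0, m) = 1" using row0 by simp
  have "det B = (\<Sum>j<Suc m. B $$ (0, j) * cofactor B 0 j)"
    by (rule laplace_expansion_row[OF B]) simp
  also have "\<dots> = (\<Sum>j<m. B $$ (0, j) * cofactor B 0 j) + B $$ (0, m) * cofactor B 0 m"
    by (rule sum.lessThan_Suc)
  also have "\<dots> = (-1)^m * det (mat_delete B 0 m)" by (simp only: z b0m) (simp add: cofactor_def)
  finally have e1: "det ?A = (-1)^m * det (mat_delete B 0 m)" using detB by simp
  have del: "mat_delete B 0 m = Mx (Suc d) m x * ?D"
  proof (rule eq_matI)
    fix r c assume r: "r < dim_row (Mx (Suc d) m x * ?D)" and c: "c < dim_col (Mx (Suc d) m x * ?D)"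
    then have r: "r < m" and c: "c < m" unfolding Mx_def by auto
    have "(Mx (Suc d) m x * ?D) $$ (r, c) = (\<Sum>i<m. Mx (Suc d) m x $$ (r, i) * ?D $$ (i, c))"
      using r c by (simp add: scalar_prod_def lessThan_atLeast0 Mx_def)
    also have "\<dots> = (\<Sum>i<m. if i = c then Mx (Suc d) m x $$ (r, c) * (x c - x (c + Suc d)) else 0)"
      by (intro sum.cong refl) (use c in auto)
    also have "\<dots> = Mx (Suc d) m x $$ (r, c) * (x c - x (c + Suc d))"
      using c by simp
    also have "\<dots> = ?A $$ (Suc r, c) - ?A $$ (Suc r, Suc c)"
      using PP_diff[of d r "\<lambda>k. x (c + k)"] r c unfolding Mx_def by (simp add: algebra_simps)
    also have "\<dots> = mat_delete B 0 m $$ (r, c)"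
      using r c Bent[of "Suc r" c] B unfolding mat_delete_def by simp
    finally show "mat_delete B 0 m $$ (r, c) = (Mx (Suc d) m x * ?D) $$ (r, c)" by simp
  qed (use B in \<open>auto simp: Mx_def\<close>)
  have D: "?D \<in> carrier_mat m m" by simp
  have detD: "det ?D = (\<Prod>c<m. x c - x (c + Suc d))"
    by (subst det_lower_triangular[OF _ D]) (auto simp: prod_list_diag_prod lessThan_atLeast0)
  have M: "Mx (Suc d) m x \<in> carrier_mat m m" unfolding Mx_def by simp
  have "det ?A = (\<Prod>(i, j) \<in> TT (Suc d) m. x j - x i) * (\<Prod>c<m. x (c + Suc d) - x c)"
    unfolding e1 del det_mult[OF M D] detD Suc.IH prod_neg[where m=m and b="\<lambda>c. x (c + Suc d)" and a=x] by simp
  also have "(\<Prod>c<m. x (c + Suc d) - x c) = (\<Prod>(i, j) \<in> (\<lambda>c. (c, c + Suc d)) ` {..<m}. x j - x i)"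
    by (subst prod.reindex) (auto simp: inj_on_def)
  also have "(\<Prod>(i, j) \<in> TT (Suc d) m. x j - x i) * \<dots> = (\<Prod>(i, j) \<in> TT d (Suc m). x j - x i)"
    unfolding TT_Suc by (subst prod.union_disjoint[OF _ finite_TT]) (auto simp: TT_def mult.commute)
  finally show ?case .
qed

theorem proposition2p11:
  fixes d n :: nat and x :: "nat \<Rightarrow> real"
  assumes "d \<le> n - 1" and "1 \<le> n"
  shows "(strict_mono_on {1..n} x \<longrightarrow>
           det (A_mat d n x) = (\<Prod>(i, j) \<in> {(i, j). 1 \<le> i \<and> i < j \<and> j \<le> n \<and> d + 1 \<le> j - i}. x j - x i))
       \<and> (inj_on x {1..n} \<longrightarrow> invertible_mat (A_mat d n x))"
proof -
  let ?R = "{(i, j). 1 \<le> i \<and> i < j \<and> j \<le> n \<and> d + 1 \<le> j - i}"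
  have Aeq: "A_mat d n x = Mx d (n - d) (\<lambda>k. x (Suc k))"
    unfolding A_mat_def Mx_def hcomp_PP by (intro cong_mat refl) auto
  have Req: "?R = (\<lambda>(i, j). (Suc i, Suc j)) ` TT d (n - d)"
  proof (intro equalityI subsetI)
    fix p assume "p \<in> ?R"
    then obtain i j where p: "p = (i, j)" and h: "1 \<le> i" "i < j" "j \<le> n" "d + 1 \<le> j - i" by auto
    then have "(i - 1, j - 1) \<in> TT d (n - d)" using assms unfolding TT_def by auto
    moreover have "p = (\<lambda>(i, j). (Suc i, Suc j)) (i - 1, j - 1)" using p h by auto
    ultimately show "p \<in> (\<lambda>(i, j). (Suc i, Suc j)) ` TT d (n - d)" by blast
  next
    fix p assume "p \<in> (\<lambda>(i, j). (Suc i, Suc j)) ` TT d (n - d)"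
    then show "p \<in> ?R" using assms unfolding TT_def by auto
  qed
  have detA: "det (A_mat d n x) = (\<Prod>(i, j) \<in> ?R. x j - x i)"
    unfolding Aeq det_Mx Req by (subst prod.reindex) (auto simp: inj_on_def case_prod_beta)
  have inv: "invertible_mat (A_mat d n x)" if inj: "inj_on x {1..n}"
  proof -
    have "(\<Prod>(i, j) \<in> ?R. x j - x i) \<noteq> 0"
    proof -
      have fin: "finite ?R" by (rule finite_subset[of _ "{..n} \<times> {..n}"]) auto
      have "\<forall>p\<in>?R. (case p of (i, j) \<Rightarrow> x j - x i) \<noteq> 0"
      proof
        fix p assume "p \<in> ?R"
        then obtain i j where "p = (i, j)" "1 \<le> i" "i < j" "j \<le> n" by auto
        then show "(case p of (i, j) \<Rightarrow> x j - x i) \<noteq> 0"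
          using inj unfolding inj_on_def by force
      qed
      then show ?thesis using fin by (simp add: prod_zero_iff)
    qed
    then have nz: "det (A_mat d n x) \<noteq> 0" using detA by simp
    have C: "A_mat d n x \<in> carrier_mat (n - d) (n - d)" unfolding A_mat_def by simp
    from det_non_zero_imp_unit[OF C nz, of "()"]
    obtain B where B: "B \<in> carrier_mat (n - d) (n - d)" and AB: "A_mat d n x * B = 1\<^sub>m (n - d)"
      and BA: "B * A_mat d n x = 1\<^sub>m (n - d)"
      unfolding Units_def ring_mat_def by auto
    show ?thesis unfolding invertible_mat_def inverts_mat_def
      using C B AB BA by (intro conjI exI[of _ B]) auto
  qed
  show ?thesis using detA inv by blast
qed

end
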